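(* For every approval-based multi-winner election $\sigma=\langle\mathcal V,\mathcal C,S,B\rangle$, every non-empty $\mathcal A\subseteq\mathcal C$ and every $F\in\mathfrak F^{\mathrm{opt}}_{\sigma,\mathcal A}$, there exists a non-empty $\mathcal K\subseteq\mathcal A$ with the following two properties: 1. $\mathrm{Supp}_F(c)=\mathrm{maxMin}(\sigma,\mathcal A)$ for every $c\in\mathcal K$; 2. $F(y,c)=0$ for every $c\in\mathcal A\setminus\mathcal K$ and every $y\in2^{\mathcal C}$ with $y\cap\mathcal K\neq\emptyset$.
   Context: An approval-based multi-winner election is a tuple $\sigma=\langle \mathcal V,\mathcal C,S,B\rangle$, where $\mathcal V$ is a finite set of agents, $\mathcal C$ is a finite set of candidates, $1\le S\le|\mathcal C|$ is an integer, and $B:2^{\mathcal C}\to\mathbb N$ gives, for each $\mathcal A\subseteq\mathcal C$, the number $B(\mathcal A)$ of agents whose ballot is exactly $\mathcal A$ (with $\sum_{\mathcal A}B(\mathcal A)\le|\mathcal V|$). For a non-empty $\mathcal A\subseteq\mathcal C$, the family $\mathfrak F_{\sigma,\mathcal A}$ is the set of all $F:2^{\mathcal C}\times\mathcal A\to\mathbb R$ such that: - $F(y,c)\ge0$ for all $y$ and $c$; - $F(y,c)=0$ if $c\notin y$; - $\sum_{c\in\mathcal A\cap y}F(y,c)=B(y)$ whenever $y\cap\mathcal A\neq\emptyset$. We write $\mathrm{Supp}_F(c)=\sum_yF(y,c)$ and $\mathrm{maxMin}(\sigma,\mathcal A)=\sup_{F\in\mathfrak F_{\sigma,\mathcal A}}\min_{c\in\mathcal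 A}\mathrm{Supp}_F(c)$. We also write $\mathfrak F^{\mathrm{opt}}_{\sigma,\mathcal A}=\{F\in\mathfrak F_{\sigma,\mathcal A}:\mathrm{Supp}_F(c)\ge\mathrm{maxMin}(\sigma,\mathcal A)\ \forall c\in\mathcal A\}$. *)

theory Defs
  imports "HOL-Analysis.Analysis"
begin

text \<open>An approval-based multi-winner election: agents V, candidates C, committee
size S, and ballot counts B (B y = number of agents whose ballot is exactly y).\<close>

definition election :: "'v set \<Rightarrow> 'c set \<Rightarrow> nat \<Rightarrow> ('c set \<Rightarrow> nat) \<Rightarrow> bool" where
  "election V C S B \<longleftrightarrow> finite V \<and> finite C \<and> 1 \<le> S \<and> S \<le> card C
     \<and> (\<forall>y. \<not> y \<subseteq> C \<longrightarrow> B y = 0)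
     \<and> (\<Sum>y\<in>Pow C. B y) \<le> card V"

text \<open>The family F_{sigma,A}; F is a function on 2^C x A (values outside this
domain are irrelevant and unconstrained).\<close>

definition Fam :: "'c set \<Rightarrow> ('c set \<Rightarrow> nat) \<Rightarrow> 'c set \<Rightarrow> ('c set \<Rightarrow> 'c \<Rightarrow> real) set" where
  "Fam C B A = {F. (\<forall>y\<in>Pow C. \<forall>c\<in>A. F y c \<ge> 0)
     \<and> (\<forall>y\<in>Pow C. \<forall>c\<in>A. c \<notin> y \<longrightarrow> F y c = 0)
     \<and> (\<forall>y\<in>Pow C. y \<inter> A \<noteq> {} \<longrightarrow> (\<Sum>c\<in>A \<inter> y. F y c) = real (B y))}"

definition Supp :: "'c set \<Rightarrow> ('c set \<Rightarrow> 'c \<Rightarrow> real) \<Rightarrow> 'c \<Rightarrow> real" where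
  "Supp C F c = (\<Sum>y\<in>Pow C. F y c)"

definition maxMin :: "'c set \<Rightarrow> ('c set \<Rightarrow> nat) \<Rightarrow> 'c set \<Rightarrow> real" where
  "maxMin C B A = (SUP F\<in>Fam C B A. Min ((\<lambda>c. Supp C F c) ` A))"

definition Fopt :: "'c set \<Rightarrow> ('c set \<Rightarrow> nat) \<Rightarrow> 'c set \<Rightarrow> ('c set \<Rightarrow> 'c \<Rightarrow> real) set" where
  "Fopt C B A = {F\<in>Fam C B A. \<forall>c\<in>A. Supp C F c \<ge> maxMin C B A}"

end

theory Submission
  imports Defs
begin

lemma Fam_zero: "G \<in> Fam C B A \<Longrightarrow> y \<in> Pow C \<Longrightarrow> c \<in> A \<Longrightarrow> c \<notin> y \<Longrightarrow> G y c = 0"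
  unfolding Fam_def by blast

lemma Fam_sum: "G \<in> Fam C B A \<Longrightarrow> y \<in> Pow C \<Longrightarrow> y \<inter> A \<noteq> {} \<Longrightarrow> (\<Sum>c\<in>A \<inter> y. G y c) = real (B y)"
  unfolding Fam_def by blast

lemma FamI:
  assumes "\<And>y c. y \<in> Pow C \<Longrightarrow> c \<in> A \<Longrightarrow> G y c \<ge> 0"
    and "\<And>y c. y \<in> Pow C \<Longrightarrow> c \<in> A \<Longrightarrow> c \<notin> y \<Longrightarrow> G y c = 0"
    and "\<And>y. y \<in> Pow C \<Longrightarrow> y \<inter> A \<noteq> {} \<Longrightarrow> (\<Sum>c\<in>A \<inter> y. G y c) = real (B y)"
  shows "G \<in> Fam C B A"
  unfolding Fam_def using assms by blast

lemma Fam_nonneg: "G \<in> Fam C B A \<Longrightarrow> y \<in> Pow C \<Longrightarrow> c \<in> A \<Longrightarrow> 0 \<le> G y c"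
  by (simp add: Fam_def)

lemma supp_bound:
  assumes "finite C" "G \<in> Fam C B A" "c \<in> A"
  shows "Supp C G c \<le> (\<Sum>y\<in>Pow C. real (B y))"
  unfolding Supp_def
proof (rule sum_mono)
  fix y assume y: "y \<in> Pow C"
  show "G y c \<le> real (B y)"
  proof (cases "c \<in> y")
    case True
    then have ne: "y \<inter> A \<noteq> {}" using assms(3) by blast
    have fin: "finite (A \<inter> y)" using y assms(1) by (meson PowD finite_Int finite_subset)
    have "G y c \<le> (\<Sum>c'\<in>A \<inter> y. G y c')"
      by (rule member_le_sum) (use True assms(2,3) y fin Fam_nonneg[OF assms(2) y] in auto)
    also have "\<dots> = real (B y)" using Fam_sum[OF assms(2) y ne] .
    finally show ?thesis .
  next
    case False
    then have "G y c = 0" using Fam_zero[OF assms(2) y assms(3)] by simp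
    then show ?thesis by simp
  qed
qed

lemma step:
  assumes fin: "finite C"
    and G: "G \<in> Fam C B A" and t: "t \<in> A" and c: "c \<in> A" and tc: "t \<noteq> c"
    and y0: "y0 \<in> Pow C" and ty: "t \<in> y0" and pos: "G y0 c > 0"
    and e: "0 < e" "e < G y0 c"
  defines "d \<equiv> (\<lambda>x. (if x = t then e else 0) + (if x = c then - e else 0))"
  defines "G' \<equiv> (\<lambda>y x. G y x + (if y = y0 then d x else 0))"
  shows "G' \<in> Fam C B A" "\<And>x. Supp C G' x = Supp C G x + d x"
    "\<And>y x. y \<in> Pow C \<Longrightarrow> x \<in> A \<Longrightarrow> G y x \<noteq> 0 \<Longrightarrow> G' y x \<noteq> 0"
proof -
  have cy: "c \<in> y0"
  proof (rule ccontr)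
    assume "c \<notin> y0"
    then have "G y0 c = 0" using Fam_zero[OF G y0 c] by simp
    with pos show False by simp
  qed
  have finP: "finite (Pow C)" using fin by simp
  show "\<And>x. Supp C G' x = Supp C G x + d x"
    unfolding Supp_def G'_def using finP y0 by (simp add: sum.distrib)
  show "G' \<in> Fam C B A"
  proof (rule FamI)
    fix y x assume y: "y \<in> Pow C" and x: "x \<in> A"
    show "0 \<le> G' y x" using Fam_nonneg[OF G y x] Fam_nonneg[OF G y0 c] e tc by (auto simp: G'_def d_def)
  next
    fix y x assume y: "y \<in> Pow C" and x: "x \<in> A" and xy: "x \<notin> y"
    have "G y x = 0" using Fam_zero[OF G y x xy] .
    then show "G' y x = 0" using xy ty cy by (auto simp: G'_def d_def)
  next
    fix y assume y: "y \<in> Pow C" and ne: "y \<inter> A \<noteq> {}"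
    have finy: "finite (A \<inter> y)" using y fin by (meson PowD finite_Int finite_subset)
    have "(\<Sum>x\<in>A \<inter> y. G' y x) = (\<Sum>x\<in>A \<inter> y. G y x) + (if y = y0 then (\<Sum>x\<in>A \<inter> y. d x) else 0)"
      unfolding G'_def by (simp add: sum.distrib)
    also have "(if y = y0 then (\<Sum>x\<in>A \<inter> y. d x) else 0) = 0"
      unfolding d_def using finy t c ty cy by (cases "y = y0") (simp_all add: sum.distrib sum.delta sum.delta')
    finally show "(\<Sum>x\<in>A \<inter> y. G' y x) = real (B y)" using Fam_sum[OF G y] ne by (simp add: Int_commute)
  qed
  show "\<And>y x. y \<in> Pow C \<Longrightarrow> x \<in> A \<Longrightarrow> G y x \<noteq> 0 \<Longrightarrow> G' y x \<noteq> 0"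
  proof -
    fix y x assume y: "y \<in> Pow C" and x: "x \<in> A" and nz: "G y x \<noteq> 0"
    have "0 \<le> G y x" using Fam_nonneg[OF G y x] .
    then have "G y x > 0" using nz by linarith
    then show "G' y x \<noteq> 0" using e tc by (auto simp: G'_def d_def)
  qed
qed

lemma main:
  assumes fin: "finite C" and AC: "A \<subseteq> C" and Ane: "A \<noteq> {}"
    and bound: "\<forall>G\<in>Fam C B A. Min ((\<lambda>c. Supp C G c) ` A) \<le> m"
    and F: "F \<in> Fam C B A"
    and H: "\<forall>S. S \<noteq> {} \<longrightarrow> S \<subseteq> {c\<in>A. Supp C F c = m} \<longrightarrow>
              (\<exists>c\<in>A - S. \<exists>y\<in>Pow C. y \<inter> S \<noteq> {} \<and> F y c \<noteq> 0)"
  shows "\<forall>G. G \<in> Fam C B A \<longrightarrow> (\<forall>c\<in>A. Supp C G c \<ge> m)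
     \<longrightarrow> {c\<in>A. Supp C G c = m} \<subseteq> {c\<in>A. Supp C F c = m}
     \<longrightarrow> (\<forall>y\<in>Pow C. \<forall>c\<in>A. F y c \<noteq> 0 \<longrightarrow> G y c \<noteq> 0)
     \<longrightarrow> card {c\<in>A. Supp C G c = m} = n \<longrightarrow> False"
proof (induction n rule: less_induct)
  case (less n)
  show ?case
  proof (intro allI impI)
    fix G assume G: "G \<in> Fam C B A" and ge: "\<forall>c\<in>A. Supp C G c \<ge> m"
      and sub: "{c\<in>A. Supp C G c = m} \<subseteq> {c\<in>A. Supp C F c = m}"
      and nz: "\<forall>y\<in>Pow C. \<forall>c\<in>A. F y c \<noteq> 0 \<longrightarrow> G y c \<noteq> 0"
      and cd: "card {c\<in>A. Supp C G c = m} = n"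
    have finA: "finite A" using fin AC finite_subset by blast
    define T where "T = {c\<in>A. Supp C G c = m}"
    show False
    proof (cases "T = {}")
      case True
      then have gt: "\<forall>c\<in>A. Supp C G c > m" using ge unfolding T_def by force
      from Ane have "Min ((\<lambda>c. Supp C G c) ` A) \<in> (\<lambda>c. Supp C G c) ` A"
        using finA by (intro Min_in) auto
      then have "Min ((\<lambda>c. Supp C G c) ` A) > m" using gt by auto
      then show False using bound G by force
    next
      case False
      have "T \<subseteq> {c\<in>A. Supp C F c = m}" using sub T_def by simp
      from H[rule_format, OF False this] obtain c y where
        c: "c \<in> A - T" and y: "y \<in> Pow C" and yT: "y \<inter> T \<noteq> {}" and Fyc: "F y c \<noteq> 0"
        by blast
      obtain t where t: "t \<in> y" "t \<in> T" using yT by blast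
      have tA: "t \<in> A" and tm: "Supp C G t = m" using t T_def by auto
      have cA0: "c \<in> A" using c by simp
      have Gyc: "G y c \<noteq> 0" using nz[rule_format, OF y cA0 Fyc] .
      have "0 \<le> G y c" using Fam_nonneg[OF G y cA0] .
      then have Gpos: "G y c > 0" using Gyc by linarith
      have cm: "Supp C G c > m" using c ge T_def by force
      have tc: "t \<noteq> c" using c t by auto
      define e where "e = min (G y c) (Supp C G c - m) / 2"
      have e: "0 < e" "e < G y c" "e < Supp C G c - m"
        using Gpos cm unfolding e_def by auto
      define d where "d \<equiv> (\<lambda>x. (if x = t then e else 0) + (if x = c then - e else (0::real)))"
      define G' where "G' \<equiv> (\<lambda>ya x. G ya x + (if ya = y then d x else 0))"
      note st = step[OF fin G tA _ tc y t(1) Gpos e(1,2)]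
      have cA: "c \<in> A" using c by simp
      have G'F: "G' \<in> Fam C B A" using st(1)[OF cA] unfolding G'_def d_def .
      have S': "\<And>x. Supp C G' x = Supp C G x + d x" using st(2)[OF cA] unfolding G'_def d_def .
      have dv: "\<And>x. d x = (if x = t then e else if x = c then - e else 0)"
        using tc unfolding d_def by auto
      have T': "{x\<in>A. Supp C G' x = m} = T - {t}"
      proof (rule set_eqI)
        fix x
        show "x \<in> {x\<in>A. Supp C G' x = m} \<longleftrightarrow> x \<in> T - {t}"
        proof (cases "x = t")
          case True
          then show ?thesis using e(1) tm by (simp add: S' dv)
        next
          case nt: False
          show ?thesis
          proof (cases "x = c")
            case True
            have "Supp C G c - e \<noteq> m" using e(3) by linarith
            then show ?thesis using True tc c by (simp add: S' dv T_def)
          next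
            case False
            then show ?thesis using nt by (simp add: S' dv T_def)
          qed
        qed
      qed
      have finT: "finite T" using finA T_def by simp
      have lt: "card (T - {t}) < n" using cd finT t(2) unfolding T_def[symmetric]
        by (metis card_Diff1_less)
      have ge': "\<forall>x\<in>A. Supp C G' x \<ge> m"
      proof
        fix x assume x: "x \<in> A"
        have g: "Supp C G x \<ge> m" using ge x by blast
        show "Supp C G' x \<ge> m"
          using g e(1,3) by (cases "x = t"; cases "x = c") (simp_all add: S' dv)
      qed
      have sub': "{x\<in>A. Supp C G' x = m} \<subseteq> {c\<in>A. Supp C F c = m}"
        using T' sub T_def by auto
      have nz': "\<forall>ya\<in>Pow C. \<forall>x\<in>A. F ya x \<noteq> 0 \<longrightarrow> G' ya x \<noteq> 0"
      proof (intro ballI impI)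
        fix ya x assume ya: "ya \<in> Pow C" and x: "x \<in> A" and Fx: "F ya x \<noteq> 0"
        show "G' ya x \<noteq> 0"
          using st(3)[OF cA ya x nz[rule_format, OF ya x Fx]] unfolding G'_def d_def .
      qed
      have cd': "card {x\<in>A. Supp C G' x = m} = card (T - {t})" using T' by simp
      show False using less.IH[OF lt, THEN spec, of G', THEN mp, OF G'F, THEN mp, OF ge',
          THEN mp, OF sub', THEN mp, OF nz', THEN mp, OF cd'] .
    qed
  qed
qed

theorem lemma3:
  fixes V :: "'v set" and C :: "'c set" and S :: nat and B :: "'c set \<Rightarrow> nat"
    and A :: "'c set" and F :: "'c set \<Rightarrow> 'c \<Rightarrow> real"
  assumes "election V C S B"
    and "A \<noteq> {}" and "A \<subseteq> C"
    and "F \<in> Fopt C B A"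
  shows "\<exists>K. K \<noteq> {} \<and> K \<subseteq> A
           \<and> (\<forall>c\<in>K. Supp C F c = maxMin C B A)
           \<and> (\<forall>c\<in>A - K. \<forall>y\<in>Pow C. y \<inter> K \<noteq> {} \<longrightarrow> F y c = 0)"
proof (rule ccontr)
  assume neg: "\<not> ?thesis"
  have fin: "finite C" using assms(1) by (simp add: election_def)
  have finA: "finite A" using fin assms(3) finite_subset by blast
  have F: "F \<in> Fam C B A" and ge: "\<forall>c\<in>A. Supp C F c \<ge> maxMin C B A"
    using assms(4) by (auto simp: Fopt_def)
  have bound: "\<forall>G\<in>Fam C B A. Min ((\<lambda>c. Supp C G c) ` A) \<le> maxMin C B A"
  proof
    fix G assume G: "G \<in> Fam C B A"
    have bdd: "bdd_above ((\<lambda>G. Min ((\<lambda>c. Supp C G c) ` A)) ` Fam C B A)"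
    proof (rule bdd_aboveI2)
      fix H assume H: "H \<in> Fam C B A"
      obtain a where a: "a \<in> A" using assms(2) by blast
      have "Min ((\<lambda>c. Supp C H c) ` A) \<le> Supp C H a" using finA a by simp
      also have "\<dots> \<le> (\<Sum>y\<in>Pow C. real (B y))" by (rule supp_bound[OF fin H a])
      finally show "Min ((\<lambda>c. Supp C H c) ` A) \<le> (\<Sum>y\<in>Pow C. real (B y))" .
    qed
    show "Min ((\<lambda>c. Supp C G c) ` A) \<le> maxMin C B A"
      unfolding maxMin_def by (rule cSUP_upper[OF G bdd])
  qed
  have H: "\<forall>S. S \<noteq> {} \<longrightarrow> S \<subseteq> {c\<in>A. Supp C F c = maxMin C B A} \<longrightarrow>
              (\<exists>c\<in>A - S. \<exists>y\<in>Pow C. y \<inter> S \<noteq> {} \<and> F y c \<noteq> 0)"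
  proof (intro allI impI)
    fix S assume S: "S \<noteq> {}" "S \<subseteq> {c\<in>A. Supp C F c = maxMin C B A}"
    have "S \<subseteq> A" "\<forall>c\<in>S. Supp C F c = maxMin C B A" using S(2) by auto
    then have "\<not> (\<forall>c\<in>A - S. \<forall>y\<in>Pow C. y \<inter> S \<noteq> {} \<longrightarrow> F y c = 0)"
      using neg S(1) by blast
    then show "\<exists>c\<in>A - S. \<exists>y\<in>Pow C. y \<inter> S \<noteq> {} \<and> F y c \<noteq> 0" by blast
  qed
  have tr: "\<forall>y\<in>Pow C. \<forall>c\<in>A. F y c \<noteq> 0 \<longrightarrow> F y c \<noteq> 0" by simp
  show False
    using main[OF fin assms(3) assms(2) bound F H, THEN spec, of F, THEN mp, OF F, THEN mp, OF ge, THEN mp, OF order_refl, THEN mp, OF tr, THEN mp, OF refl] .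
qed

end
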